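(* Let $\mathbf x_1,\dots,\mathbf x_l\in\mathbb{R}^n$, $y_1,\dots,y_l\in\{1,-1\}$, $\bar{\mathbf x}_i=y_i\mathbf x_i$. For $s>0$ let $\mathcal F_s=\{\mathbf w\in\mathbb{R}^n:\sum_{i=1}^l[1-y_i\mathbf w^T\mathbf x_i]_+\le s\}$ and, when $\mathcal F_s\neq\emptyset$, let $\mathbf w^*(s)$ be the optimal solution of $\min_{\mathbf w\in\mathcal F_s}\frac12\|\mathbf w\|^2$. Let $s_a>s_b>0$, let $\mathbf w^*(s_a)$ be the optimal solution at $s=s_a$ (assumed nonzero) and $\hat{\mathbf w}(s_b)\in\mathcal F_{s_b}$ a feasible point at $s=s_b$. Define $$\rho=-\|\mathbf w^*(s_a)\|^2+\tfrac12\langle\mathbf w^*(s_a),\hat{\mathbf w}(s_b)\rangle,\qquad \mathbf v^\perp=\mathbf v-\tfrac{\mathbf v^T\mathbf w^*(s_a)}{\|\mathbf w^*(s_a)\|^2}\mathbf w^*(s_a)\ \ (\mathbf v\in\mathbb{R}^n),$$ $$\ell_i=-\tfrac{\langle\mathbf w^*(s_a),\bar{\mathbf x}_i\rangle}{\|\mathbf w^*(s_a)\|^2}\rho+\tfrac12\langle\hat{\mathbf w}(s_b),\bar{\mathbf x}_i\rangle-\|\bar{\mathbf x}_i^\perp\|\sqrt{\tfrac14\|\hat{\mathbf w}(s_b)\|^2-\tfrac{\rho^2}{\|\mathbf w^*(s_a)\|^2}},$$ and $u_i=\tfrac12\big(\langle\hat{\mathbf w}(s_b),\bar{\mathbf x}_i\rangle+\|\hat{\mathbf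 w}(s_b)\|\|\bar{\mathbf x}_i\|\big)$ if $\langle\mathbf w^*(s_a),\bar{\mathbf x}_i\rangle\ge-\tfrac{2\|\bar{\mathbf x}_i\|}{\|\hat{\mathbf w}(s_b)\|}\rho$, and otherwise $$u_i=-\tfrac{\langle\mathbf w^*(s_a),\bar{\mathbf x}_i\rangle}{\|\mathbf w^*(s_a)\|^2}\rho+\tfrac12\langle\hat{\mathbf w}(s_b),\bar{\mathbf x}_i\rangle+\|\bar{\mathbf x}_i^\perp\|\sqrt{\tfrac14\|\hat{\mathbf w}(s_b)\|^2-\tfrac{\rho^2}{\|\mathbf w^*(s_a)\|^2}}.$$ Then for all $s\in[s_b,s_a]$: if $\langle\mathbf w^*(s_a),\bar{\mathbf x}_i\rangle>\tfrac{2\|\bar{\mathbf x}_i\|}{\|\hat{\mathbf w}(s_b)\|}\rho$ and $\ell_i>1$, then $\langle\mathbf w^*(s),\bar{\mathbf x}_i\rangle>1$ (i.e., $i\in\mathcal R$); and if $u_i<1$, then $\langle\mathbf w^*(s),\bar{\mathbf x}_i\rangle<1$ (i.e., $i\in\mathcal L$).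
   Context: $[t]_+=\max\{t,0\}$; $\|\cdot\|$ is the Euclidean norm. For the parameter $s$, $\mathcal R=\{i:\langle\mathbf w^*(s),\bar{\mathbf x}_i\rangle>1\}$ and $\mathcal L=\{i:\langle\mathbf w^*(s),\bar{\mathbf x}_i\rangle<1\}$ (non-support vectors). *)

theory Defs
  imports "HOL-Analysis.Analysis"
begin

definition xbar :: "(nat \<Rightarrow> 'a::euclidean_space) \<Rightarrow> (nat \<Rightarrow> real) \<Rightarrow> nat \<Rightarrow> 'a" where
  "xbar x y i = y i *\<^sub>R x i"

definition feas :: "nat \<Rightarrow> (nat \<Rightarrow> 'a::euclidean_space) \<Rightarrow> (nat \<Rightarrow> real) \<Rightarrow> real \<Rightarrow> 'a set" where
  "feas l x y s = {w. (\<Sum>i<l. max (1 - y i * (w \<bullet> x i)) 0) \<le> s}"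

definition is_opt :: "nat \<Rightarrow> (nat \<Rightarrow> 'a::euclidean_space) \<Rightarrow> (nat \<Rightarrow> real) \<Rightarrow> real \<Rightarrow> 'a \<Rightarrow> bool" where
  "is_opt l x y s w \<longleftrightarrow> w \<in> feas l x y s \<and>
     (\<forall>v \<in> feas l x y s. (1/2) * norm w ^ 2 \<le> (1/2) * norm v ^ 2)"

definition wstar :: "nat \<Rightarrow> (nat \<Rightarrow> 'a::euclidean_space) \<Rightarrow> (nat \<Rightarrow> real) \<Rightarrow> real \<Rightarrow> 'a" where
  "wstar l x y s = (THE w. is_opt l x y s w)"

definition perp :: "'a::euclidean_space \<Rightarrow> 'a \<Rightarrow> 'a" where
  "perp w v = v - ((v \<bullet> w) / norm w ^ 2) *\<^sub>R w"

end

theory Submission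
  imports Defs
begin



lemma feas_closed: "closed (feas l x y s)"
  unfolding feas_def by (intro closed_Collect_le continuous_intros)

lemma feas_convex: "convex (feas l x y s)"
proof (rule convexI)
  fix u v and a b :: real
  assume u: "u \<in> feas l x y s" and v: "v \<in> feas l x y s" and ab: "0 \<le> a" "0 \<le> b" "a + b = 1"
  have pt: "max (1 - y i * ((a *\<^sub>R u + b *\<^sub>R v) \<bullet> x i)) 0
      \<le> a * max (1 - y i * (u \<bullet> x i)) 0 + b * max (1 - y i * (v \<bullet> x i)) 0" for i
  proof -
    have e: "1 - y i * ((a *\<^sub>R u + b *\<^sub>R v) \<bullet> x i) = a * (1 - y i * (u \<bullet> x i)) + b * (1 - y i * (v \<bullet> x i))"
      using ab by (simp add: inner_add_left algebra_simps)
    have 1: "a * (1 - y i * (u \<bullet> x i)) \<le> a * max (1 - y i * (u \<bullet> x i)) 0"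
      using ab by (intro mult_left_mono) auto
    have 2: "b * (1 - y i * (v \<bullet> x i)) \<le> b * max (1 - y i * (v \<bullet> x i)) 0"
      using ab by (intro mult_left_mono) auto
    have 3: "0 \<le> a * max (1 - y i * (u \<bullet> x i)) 0 + b * max (1 - y i * (v \<bullet> x i)) 0"
      using ab by simp
    show ?thesis unfolding e using 1 2 3 by simp
  qed
  have "(\<Sum>i<l. max (1 - y i * ((a *\<^sub>R u + b *\<^sub>R v) \<bullet> x i)) 0)
      \<le> (\<Sum>i<l. a * max (1 - y i * (u \<bullet> x i)) 0 + b * max (1 - y i * (v \<bullet> x i)) 0)"
    by (rule sum_mono) (rule pt)
  also have "\<dots> = a * (\<Sum>i<l. max (1 - y i * (u \<bullet> x i)) 0) + b * (\<Sum>i<l. max (1 - y i * (v \<bullet> x i)) 0)"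
    by (simp add: sum.distrib sum_distrib_left)
  also have "\<dots> \<le> a * s + b * s"
    using u v ab unfolding feas_def by (intro add_mono mult_left_mono) auto
  also have "\<dots> = s" using ab by (metis distrib_right mult_1)
  finally show "a *\<^sub>R u + b *\<^sub>R v \<in> feas l x y s" unfolding feas_def by simp
qed

lemma feas_mono: "s \<le> t \<Longrightarrow> feas l x y s \<subseteq> feas l x y t"
  unfolding feas_def by auto

lemma wstar_props:
  assumes "v0 \<in> feas l x y s"
  shows "wstar l x y s \<in> feas l x y s"
    "\<And>v. v \<in> feas l x y s \<Longrightarrow> wstar l x y s \<bullet> (v - wstar l x y s) \<ge> 0"
proof -
  let ?S = "feas l x y s"
  let ?c = "closest_point ?S 0"
  have ne: "?S \<noteq> {}" using assms by auto
  have c1: "?c \<in> ?S" and c2: "\<forall>z\<in>?S. dist 0 ?c \<le> dist 0 z"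
    using closest_point_exists[OF feas_closed ne, of 0] by auto
  have opt: "is_opt l x y s ?c" unfolding is_opt_def using c1 c2
    by (auto simp: dist_norm intro: power_mono)
  have "wstar l x y s = ?c" unfolding wstar_def
  proof (rule the_equality[where P="is_opt l x y s", OF opt])
    fix w assume "is_opt l x y s w"
    then have "w \<in> ?S" "\<forall>z\<in>?S. dist 0 w \<le> dist 0 z"
      unfolding is_opt_def by (auto simp: dist_norm power_mono_iff)
    then show "w = ?c"
      using any_closest_point_unique[OF feas_convex feas_closed _ c1 _ c2] by blast
  qed
  then show "wstar l x y s \<in> ?S" using c1 by simp
  fix v assume "v \<in> ?S"
  then have "(0 - ?c) \<bullet> (v - ?c) \<le> 0"
    using any_closest_point_dot[OF feas_convex feas_closed c1 _ c2] by blast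
  then show "wstar l x y s \<bullet> (v - wstar l x y s) \<ge> 0" using \<open>wstar l x y s = ?c\<close> by simp
qed

lemma lam_nonneg:
  fixes a0 r be p R B :: real
  assumes R: "R > 0" and r: "r \<ge> 0" "r^2 = R^2 - a0^2" and p: "p \<ge> 0" "p^2 + be^2 = B^2"
    and B: "B \<ge> 0" and c: "R * be + B * a0 \<ge> 0"
  shows "be * r + p * a0 \<ge> 0"
proof (cases "a0 < 0")
  case True
  have "R * be \<ge> B * (- a0)" using c by simp
  moreover have "B * (-a0) \<ge> 0" using True B by (simp add: mult_nonneg_nonpos)
  ultimately have "0 \<le> R * be" by linarith
  hence be0: "be \<ge> 0" using R by (simp add: zero_le_mult_iff)
  have "(R*be)^2 \<ge> (B*(-a0))^2" using \<open>R * be \<ge> B * (- a0)\<close> \<open>B * (-a0) \<ge> 0\<close>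
    by (intro power_mono) auto
  moreover have "(be*r)^2 - (p*(-a0))^2 = (R*be)^2 - (B*(-a0))^2"
    using p(2) by (simp add: r(2) power_mult_distrib algebra_simps flip: p(2))
  ultimately have "(be*r)^2 \<ge> (p*(-a0))^2" by linarith
  hence "be*r \<ge> p*(-a0)" using be0 r(1) by (meson mult_nonneg_nonneg power2_le_imp_le)
  then show ?thesis by simp
next
  case False
  show ?thesis
  proof (cases "be \<ge> 0")
    case True then show ?thesis using False r p by simp
  next
    case F2: False
    have "B * a0 \<ge> R * (-be)" using c by simp
    moreover have "R * (-be) \<ge> 0" using F2 R by (simp add: mult_nonneg_nonpos)
    ultimately have "(B*a0)^2 \<ge> (R*(-be))^2" by (intro power_mono) auto
    moreover have "(p*a0)^2 - (-be*r)^2 = (B*a0)^2 - (R*(-be))^2"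
      using p(2) by (simp add: r(2) power_mult_distrib algebra_simps flip: p(2))
    ultimately have "(p*a0)^2 \<ge> (-be*r)^2" by linarith
    hence "p*a0 \<ge> -be*r" using False p by (meson mult_nonneg_nonneg not_less power2_le_imp_le)
    then show ?thesis by simp
  qed
qed

lemma real_core:
  fixes al q a0 r be p R B :: real
  assumes R: "R > 0" and al: "al \<ge> a0" and aq: "al^2 + q^2 \<le> R^2" and q: "q \<ge> 0"
    and r: "r \<ge> 0" "r^2 = R^2 - a0^2" and p: "p \<ge> 0" "p^2 + be^2 = B^2"
    and B: "B \<ge> 0" and c: "R * be + B * a0 \<ge> 0"
  shows "al * be - p * q \<ge> a0 * be - p * r"
proof (cases "r > 0")
  case True
  have lam: "be * r + p * a0 \<ge> 0" by (rule lam_nonneg[OF R r p B c])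
  have cs: "al * a0 + q * r \<le> R^2"
  proof -
    have "(al^2 + q^2) * (a0^2 + r^2) - (al * a0 + q * r)^2 = (al*r - q*a0)^2"
      by (simp add: power2_eq_square algebra_simps)
    hence "(al * a0 + q * r)^2 \<le> (al^2 + q^2) * (a0^2 + r^2)"
      using zero_le_power2[of "al*r - q*a0"] by linarith
    also have "\<dots> \<le> R^2 * R^2" using mult_right_mono[OF aq, of "R^2"] r(2) by simp
    finally have "(al * a0 + q * r)^2 \<le> (R^2)^2" by (simp add: power2_eq_square)
    then show ?thesis by (rule power2_le_imp_le) simp
  qed
  have key: "r * ((al - a0) * be - p * (q - r)) = (be * r + p * a0) * (al - a0) - p * (al * a0 + q * r - R^2)"
  proof -
    have "r * ((al - a0) * be - p * (q - r)) - ((be * r + p * a0) * (al - a0) - p * (al * a0 + q * r - R^2))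
       = p * (r^2 - (R^2 - a0^2))" by (simp add: algebra_simps power2_eq_square)
    then show ?thesis using r(2) by simp
  qed
  have "(be * r + p * a0) * (al - a0) - p * (al * a0 + q * r - R^2) \<ge> 0"
  proof -
    have "(be * r + p * a0) * (al - a0) \<ge> 0" using lam al by simp
    moreover have "p * (al * a0 + q * r - R^2) \<le> 0" using p cs by (simp add: mult_nonneg_nonpos)
    ultimately show ?thesis by linarith
  qed
  hence "r * ((al - a0) * be - p * (q - r)) \<ge> 0" using key by simp
  hence "(al - a0) * be - p * (q - r) \<ge> 0" using True by (simp add: zero_le_mult_iff)
  then show ?thesis by (simp add: algebra_simps)
next
  case False
  hence r0: "r = 0" using r by simp
  hence "a0^2 = R^2" using r by simp
  hence "a0 = R \<or> a0 = -R" by (simp add: power2_eq_iff)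
  then show ?thesis
  proof
    assume a: "a0 = R"
    have "al^2 \<le> R^2" using aq zero_le_power2[of q] by linarith
    hence "al \<le> R" by (rule power2_le_imp_le) (use R in auto)
    hence alR: "al = R" using al a by linarith
    hence "q^2 \<le> 0" using aq by simp
    hence q0: "q = 0" by simp
    show ?thesis using alR a q0 r0 by simp
  next
    assume a: "a0 = -R"
    have "R * (be - B) \<ge> 0" using c a by (simp add: algebra_simps)
    hence "be - B \<ge> 0" using R by (simp add: zero_le_mult_iff)
    hence "be^2 \<ge> B^2" using B by (intro power_mono) auto
    hence "p^2 \<le> 0" using p(2) by linarith
    hence p0: "p = 0" by simp
    have "be \<ge> 0" using \<open>be - B \<ge> 0\<close> B by linarith
    hence "(al - a0) * be \<ge> 0" using al by (intro mult_nonneg_nonneg) auto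
    moreover have "(al - a0) * be = al * be - a0 * be" by (simp add: algebra_simps)
    ultimately show ?thesis using p0 by simp
  qed
qed

lemma div_helper: fixes X N :: real assumes "N \<noteq> 0" shows "X * N / (N * N) = X / N"
  using assms by (simp add: field_simps)

lemma perp_inner:
  fixes a d b :: "'a::euclidean_space"
  assumes "a \<noteq> 0"
  shows "d \<bullet> b = (a \<bullet> d) * (a \<bullet> b) / norm a ^ 2 + perp a d \<bullet> perp a b"
proof -
  have n: "norm a ^ 2 \<noteq> 0" using assms by simp
  have "perp a d \<bullet> perp a b = d \<bullet> b - 2 * ((a \<bullet> d) * (a \<bullet> b) / norm a ^ 2)
     + (a \<bullet> d) * (a \<bullet> b) * (a \<bullet> a) / (norm a ^ 2 * norm a ^ 2)"
    unfolding perp_def by (simp add: inner_diff_left inner_diff_right inner_commute algebra_simps)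
  also have "a \<bullet> a = norm a ^ 2" by (simp add: power2_norm_eq_inner)
  also have "(a \<bullet> d) * (a \<bullet> b) * norm a ^ 2 / (norm a ^ 2 * norm a ^ 2) = (a \<bullet> d) * (a \<bullet> b) / norm a ^ 2"
    using div_helper[OF n] by simp
  finally show ?thesis by simp
qed

lemma perp_norm:
  fixes a d :: "'a::euclidean_space"
  assumes "a \<noteq> 0"
  shows "norm (perp a d) ^ 2 = norm d ^ 2 - (a \<bullet> d / norm a) ^ 2"
  using perp_inner[OF assms, of d d] assms
  by (simp add: power2_norm_eq_inner[symmetric] power_divide inner_commute power2_eq_square)

lemma vec_core:
  fixes a d b :: "'a::euclidean_space"
  assumes a: "a \<noteq> 0" and R: "R > 0" and d: "norm d \<le> R" and ad: "a \<bullet> d \<ge> - rho"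
    and rho: "rho \<le> norm a * R" and c: "(a \<bullet> b) * R \<ge> norm b * rho"
  shows "d \<bullet> b \<ge> - ((a \<bullet> b) / norm a ^ 2) * rho - norm (perp a b) * sqrt (R^2 - rho^2 / norm a ^ 2)"
proof -
  have na: "norm a > 0" using a by simp
  define al where "al = a \<bullet> d / norm a"
  define q where "q = norm (perp a d)"
  define a0 where "a0 = - rho / norm a"
  define r where "r = sqrt (R^2 - rho^2 / norm a ^ 2)"
  define be where "be = a \<bullet> b / norm a"
  define p where "p = norm (perp a b)"
  have "-rho \<le> norm a * R"
  proof -
    have "a \<bullet> d \<le> norm a * norm d" by (rule Cauchy_Schwarz_ineq2[THEN abs_le_D1])
    moreover have "norm a * norm d \<le> norm a * R" by (rule mult_left_mono[OF d norm_ge_zero])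
    ultimately show ?thesis using ad by linarith
  qed
  hence "\<bar>rho\<bar> \<le> norm a * R" using rho by simp
  hence "rho^2 \<le> (norm a * R)^2" by (metis power2_abs power_mono abs_ge_zero)
  hence "rho^2 \<le> R^2 * norm a ^ 2" by (simp add: power_mult_distrib mult.commute)
  moreover have "norm a ^ 2 > 0" using na by simp
  ultimately have h: "rho^2 / norm a ^ 2 \<le> R^2" by (metis pos_divide_le_eq)
  hence r2: "r^2 = R^2 - a0^2" unfolding r_def a0_def by (simp add: power_divide)
  have r0: "r \<ge> 0" unfolding r_def using h by simp
  have alge: "al \<ge> a0" unfolding al_def a0_def using divide_right_mono[OF ad, of "norm a"] by simp
  have aq: "al^2 + q^2 \<le> R^2" unfolding al_def q_def using perp_norm[OF a, of d] d
    by (simp add: power_mono)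
  have pb: "p^2 + be^2 = norm b ^ 2" unfolding p_def be_def using perp_norm[OF a, of b] by simp
  have cc: "R * be + norm b * a0 \<ge> 0" unfolding be_def a0_def using c na
    by (simp add: field_simps)
  have main: "al * be - p * q \<ge> a0 * be - p * r"
    by (rule real_core[OF R alge aq _ r0 r2 _ pb norm_ge_zero cc]) (auto simp: q_def p_def)
  have "perp a d \<bullet> perp a b \<ge> - (q * p)"
    unfolding q_def p_def using Cauchy_Schwarz_ineq2[of "perp a d" "perp a b"] by linarith
  hence "d \<bullet> b \<ge> al * be - p * q"
    unfolding al_def be_def using perp_inner[OF a, of d b] na
    by (simp add: power2_eq_square algebra_simps)
  moreover have "a0 * be - p * r = - ((a \<bullet> b) / norm a ^ 2) * rho - norm (perp a b) * sqrt (R^2 - rho^2 / norm a ^ 2)"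
    unfolding a0_def be_def p_def r_def by (simp add: power2_eq_square)
  ultimately show ?thesis using main by linarith
qed

lemma geom_setup:
  fixes wa w wh :: "'a::euclidean_space"
  assumes a: "wa \<noteq> 0" and h1: "wa \<bullet> w \<ge> norm wa ^ 2" and h2: "w \<bullet> (wh - w) \<ge> 0"
    and rho: "rho = - (norm wa ^ 2) + (1/2) * (wa \<bullet> wh)"
  shows "wh \<noteq> 0" "norm (w - (1/2) *\<^sub>R wh) \<le> norm wh / 2"
    "wa \<bullet> (w - (1/2) *\<^sub>R wh) \<ge> - rho" "rho \<le> norm wa * (norm wh / 2)"
proof -
  show "wh \<noteq> 0"
  proof
    assume "wh = 0"
    then have "w \<bullet> w \<le> 0" using h2 by (simp add: inner_diff_right)
    then have "w = 0" using inner_gt_zero_iff[of w] by linarith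
    then show False using h1 a by simp
  qed
  have "norm (w - (1/2) *\<^sub>R wh) ^ 2 = w \<bullet> w - w \<bullet> wh + (1/4) * (wh \<bullet> wh)"
    by (simp add: power2_norm_eq_inner inner_diff_left inner_diff_right inner_commute[of wh w] field_simps)
  also have "\<dots> \<le> (norm wh / 2) ^ 2"
  proof -
    have "(norm wh / 2) ^ 2 = (1/4) * (wh \<bullet> wh)" by (simp add: power2_norm_eq_inner power_divide)
    moreover have "w \<bullet> wh - w \<bullet> w \<ge> 0" using h2 by (simp add: inner_diff_right)
    ultimately show ?thesis by linarith
  qed
  finally show "norm (w - (1/2) *\<^sub>R wh) \<le> norm wh / 2"
    by (rule power2_le_imp_le) simp
  show "wa \<bullet> (w - (1/2) *\<^sub>R wh) \<ge> - rho" using h1 rho by (simp add: inner_diff_right)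
  have "wa \<bullet> wh \<le> norm wa * norm wh" by (rule Cauchy_Schwarz_ineq2[THEN abs_le_D1])
  moreover have "norm wa * (norm wh / 2) = (norm wa * norm wh) / 2" by simp
  moreover have "0 \<le> norm wa ^ 2" by simp
  ultimately show "rho \<le> norm wa * (norm wh / 2)" using rho by linarith
qed

lemma geom_lower:
  fixes wa w wh b :: "'a::euclidean_space"
  assumes a: "wa \<noteq> 0" and h1: "wa \<bullet> w \<ge> norm wa ^ 2" and h2: "w \<bullet> (wh - w) \<ge> 0"
    and rho: "rho = - (norm wa ^ 2) + (1/2) * (wa \<bullet> wh)"
    and c: "wa \<bullet> b \<ge> (2 * norm b / norm wh) * rho"
  shows "w \<bullet> b \<ge> - ((wa \<bullet> b) / norm wa ^ 2) * rho + (1/2) * (wh \<bullet> b)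
           - norm (perp wa b) * sqrt ((1/4) * norm wh ^ 2 - rho ^ 2 / norm wa ^ 2)"
proof -
  note g = geom_setup[OF a h1 h2 rho]
  define R where "R = norm wh / 2"
  have R: "R > 0" using g(1) unfolding R_def by simp
  have cR: "(wa \<bullet> b) * R \<ge> norm b * rho"
  proof -
    have "(wa \<bullet> b) * R \<ge> ((2 * norm b / norm wh) * rho) * R" by (rule mult_right_mono[OF c]) (use R in simp)
    also have "((2 * norm b / norm wh) * rho) * R = norm b * rho" unfolding R_def using g(1) by simp
    finally show ?thesis .
  qed
  have v: "(w - (1/2) *\<^sub>R wh) \<bullet> b \<ge> - ((wa \<bullet> b) / norm wa ^ 2) * rho - norm (perp wa b) * sqrt (R^2 - rho^2 / norm wa ^ 2)"
    by (rule vec_core[OF a R _ g(3) _ cR]) (use g in \<open>simp_all add: R_def\<close>)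
  have e: "(1/4) * norm wh ^ 2 = R^2" unfolding R_def by (simp add: power_divide)
  have "w \<bullet> b = (w - (1/2) *\<^sub>R wh) \<bullet> b + (1/2) * (wh \<bullet> b)" by (simp add: inner_diff_left)
  then show ?thesis unfolding e using v by linarith
qed

lemma geom_upper:
  fixes wa w wh b :: "'a::euclidean_space"
  assumes a: "wa \<noteq> 0" and h1: "wa \<bullet> w \<ge> norm wa ^ 2" and h2: "w \<bullet> (wh - w) \<ge> 0"
    and rho: "rho = - (norm wa ^ 2) + (1/2) * (wa \<bullet> wh)"
  shows "w \<bullet> b \<le> (if wa \<bullet> b \<ge> - (2 * norm b / norm wh) * rho
                       then (1/2) * (wh \<bullet> b + norm wh * norm b)
                       else - ((wa \<bullet> b) / norm wa ^ 2) * rho + (1/2) * (wh \<bullet> b)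
                        + norm (perp wa b) * sqrt ((1/4) * norm wh ^ 2 - rho ^ 2 / norm wa ^ 2))"
proof (cases "wa \<bullet> b \<ge> - (2 * norm b / norm wh) * rho")
  case True
  note g = geom_setup[OF a h1 h2 rho]
  have "(w - (1/2) *\<^sub>R wh) \<bullet> b \<le> norm (w - (1/2) *\<^sub>R wh) * norm b"
    by (rule Cauchy_Schwarz_ineq2[THEN abs_le_D1])
  also have "\<dots> \<le> norm wh / 2 * norm b" by (rule mult_right_mono[OF g(2) norm_ge_zero])
  finally have "(w - (1/2) *\<^sub>R wh) \<bullet> b \<le> norm wh / 2 * norm b" .
  moreover have "w \<bullet> b = (w - (1/2) *\<^sub>R wh) \<bullet> b + (1/2) * (wh \<bullet> b)" by (simp add: inner_diff_left)
  ultimately show ?thesis using True by simp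
next
  case False
  have "wa \<bullet> (-b) \<ge> (2 * norm (-b) / norm wh) * rho" using False by simp
  from geom_lower[OF a h1 h2 rho this]
  have "w \<bullet> (-b) \<ge> - ((wa \<bullet> (-b)) / norm wa ^ 2) * rho + (1/2) * (wh \<bullet> (-b))
           - norm (perp wa (-b)) * sqrt ((1/4) * norm wh ^ 2 - rho ^ 2 / norm wa ^ 2)" .
  moreover have "perp wa (-b) = - perp wa b" unfolding perp_def by (simp add: algebra_simps)
  ultimately show ?thesis using False by simp
qed


theorem theorem5:
  fixes l :: nat and x :: "nat \<Rightarrow> 'a::euclidean_space" and y :: "nat \<Rightarrow> real"
    and sa sb :: real and wh :: 'a
  assumes hy: "\<forall>i<l. y i = 1 \<or> y i = -1"
    and hs: "sa > sb" "sb > 0"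
    and hwa: "wstar l x y sa \<noteq> 0"
    and hwh: "wh \<in> feas l x y sb"
  shows "let wa = wstar l x y sa;
             rho = - (norm wa ^ 2) + (1/2) * (wa \<bullet> wh);
             r = sqrt ((1/4) * norm wh ^ 2 - rho ^ 2 / norm wa ^ 2);
             lo = (\<lambda>i. - ((wa \<bullet> xbar x y i) / norm wa ^ 2) * rho + (1/2) * (wh \<bullet> xbar x y i)
                        - norm (perp wa (xbar x y i)) * r);
             up = (\<lambda>i. if wa \<bullet> xbar x y i \<ge> - (2 * norm (xbar x y i) / norm wh) * rho
                       then (1/2) * (wh \<bullet> xbar x y i + norm wh * norm (xbar x y i))
                       else - ((wa \<bullet> xbar x y i) / norm wa ^ 2) * rho + (1/2) * (wh \<bullet> xbar x y i)
                        + norm (perp wa (xbar x y i)) * r)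
         in \<forall>s \<in> {sb..sa}. \<forall>i<l.
              ((wa \<bullet> xbar x y i > (2 * norm (xbar x y i) / norm wh) * rho \<and> lo i > 1
                  \<longrightarrow> wstar l x y s \<bullet> xbar x y i > 1)
             \<and> (up i < 1 \<longrightarrow> wstar l x y s \<bullet> xbar x y i < 1))"
proof -
  let ?wa = "wstar l x y sa"
  let ?rho = "- (norm ?wa ^ 2) + (1/2) * (?wa \<bullet> wh)"
  have main: "(?wa \<bullet> b > (2 * norm b / norm wh) * ?rho \<and>
      - ((?wa \<bullet> b) / norm ?wa ^ 2) * ?rho + (1/2) * (wh \<bullet> b)
        - norm (perp ?wa b) * sqrt ((1/4) * norm wh ^ 2 - ?rho ^ 2 / norm ?wa ^ 2) > 1
        \<longrightarrow> wstar l x y s \<bullet> b > 1)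
     \<and> ((if ?wa \<bullet> b \<ge> - (2 * norm b / norm wh) * ?rho
                       then (1/2) * (wh \<bullet> b + norm wh * norm b)
                       else - ((?wa \<bullet> b) / norm ?wa ^ 2) * ?rho + (1/2) * (wh \<bullet> b)
                        + norm (perp ?wa b) * sqrt ((1/4) * norm wh ^ 2 - ?rho ^ 2 / norm ?wa ^ 2)) < 1
         \<longrightarrow> wstar l x y s \<bullet> b < 1)"
    if s: "s \<in> {sb..sa}" for s b
  proof -
    let ?w = "wstar l x y s"
    have whs: "wh \<in> feas l x y s" using hwh feas_mono[of sb s] s by auto
    have whsa: "wh \<in> feas l x y sa" using hwh feas_mono[of sb sa] hs by auto
    have ws: "?w \<in> feas l x y sa" using wstar_props(1)[OF whs] feas_mono[of s sa] s by auto
    have "?wa \<bullet> (?w - ?wa) \<ge> 0" by (rule wstar_props(2)[OF whsa ws])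
    then have h1: "?wa \<bullet> ?w \<ge> norm ?wa ^ 2"
      by (simp add: inner_diff_right power2_norm_eq_inner)
    have h2: "?w \<bullet> (wh - ?w) \<ge> 0" by (rule wstar_props(2)[OF whs whs])
    show ?thesis
    proof (intro conjI impI)
      assume H: "?wa \<bullet> b > (2 * norm b / norm wh) * ?rho \<and>
        - ((?wa \<bullet> b) / norm ?wa ^ 2) * ?rho + (1/2) * (wh \<bullet> b)
        - norm (perp ?wa b) * sqrt ((1/4) * norm wh ^ 2 - ?rho ^ 2 / norm ?wa ^ 2) > 1"
      show "?w \<bullet> b > 1"
        using geom_lower[OF hwa h1 h2 refl less_imp_le[OF conjunct1[OF H]]] conjunct2[OF H]
        by linarith
    next
      assume H: "(if ?wa \<bullet> b \<ge> - (2 * norm b / norm wh) * ?rho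
                       then (1/2) * (wh \<bullet> b + norm wh * norm b)
                       else - ((?wa \<bullet> b) / norm ?wa ^ 2) * ?rho + (1/2) * (wh \<bullet> b)
                        + norm (perp ?wa b) * sqrt ((1/4) * norm wh ^ 2 - ?rho ^ 2 / norm ?wa ^ 2)) < 1"
      show "?w \<bullet> b < 1" using geom_upper[OF hwa h1 h2 refl, of b] H by linarith
    qed
  qed
  show ?thesis unfolding Let_def using main by blast
qed

end
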